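(* There is an absolute constant $C>0$ such that for every integer $n\ge 5$ with $n\equiv 1\pmod 4$ there is a dissection $D_n$ of the unit square $[0,1]^2$ into $n$ triangles with $\mathcal{R}(D_n)\le C/n^5$. Moreover $D_n$ can be taken of the following type: one triangle with vertices $(0,1),(1,1),(1,1-2/n)$ (area $1/n$), and the remaining region below the segment from $(0,1)$ to $(1,1-2/n)$ cut by $\tfrac{n-1}{4}$ vertical segments into trapezoidal slices (each with two vertical sides, bottom on the $x$-axis and top on that segment), each slice being divided into four triangles $T_1,T_2,T_3,T_4$ as follows: with the slice's bottom-left, bottom-right, top-right, top-left corners $A,B,Q,S$ and an extra point $M$ on the bottom side $AB$, $T_1=ASM$, $T_2=SM\,U$, $T_3=MUQ$, $T_4=MBQ$, where $U$ is an extra point on the top side $SQ$.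
   Context: A dissection of a polygon is a finite set of nondegenerate triangles with disjoint interiors whose union is the polygon. If its triangles have areas $a_1,\dots,a_n$, the range is $\mathcal{R}(D)=\max_{i,j}|a_i-a_j|$. *)

theory Defs
  imports "HOL-Analysis.Analysis"
begin

definition pt :: "real \<Rightarrow> real \<Rightarrow> real^2" where
  "pt x y = vector [x, y]"

definition tri :: "real^2 \<Rightarrow> real^2 \<Rightarrow> real^2 \<Rightarrow> (real^2) set" where
  "tri a b c = convex hull {a, b, c}"

definition nondeg_triangle :: "(real^2) set \<Rightarrow> bool" where
  "nondeg_triangle T \<longleftrightarrow> (\<exists>a b c. \<not> collinear {a, b, c} \<and> T = tri a b c)"

definition area :: "(real^2) set \<Rightarrow> real" where
  "area T = measure lebesgue T"

definition dissection :: "(real^2) set set \<Rightarrow> (real^2) set \<Rightarrow> bool" where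
  "dissection D P \<longleftrightarrow> finite D \<and> (\<forall>T\<in>D. nondeg_triangle T)
     \<and> (\<forall>T\<in>D. \<forall>T'\<in>D. T \<noteq> T' \<longrightarrow> interior T \<inter> interior T' = {})
     \<and> \<Union>D = P"

definition drange :: "(real^2) set set \<Rightarrow> real" where
  "drange D = Max {\<bar>area T - area T'\<bar> | T T'. T \<in> D \<and> T' \<in> D}"

definition unit_square :: "(real^2) set" where
  "unit_square = cbox (pt 0 0) (pt 1 1)"

text \<open>The dissection of the paper's special type, for n triangles, k = (n-1)/4 slices
  cut at abscissae xs 0 < xs 1 < ... < xs k, with bottom points (m i, 0) and top points
  (u i, h (u i)) in slice i (1 \<le> i \<le> k), where h is the line through (0,1) and (1,1-2/n).\<close>
definition slice_dissection ::
  "nat \<Rightarrow> nat \<Rightarrow> (nat \<Rightarrow> real) \<Rightarrow> (nat \<Rightarrow> real) \<Rightarrow> (nat \<Rightarrow> real) \<Rightarrow> (real^2) set set" where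
  "slice_dissection n k xs m u =
     (let h = (\<lambda>x. 1 - 2 * x / real n) in
      {tri (pt 0 1) (pt 1 1) (pt 1 (1 - 2 / real n))} \<union>
      (\<Union>i\<in>{1..k}.
         (let A = pt (xs (i - 1)) 0; B = pt (xs i) 0;
              Q = pt (xs i) (h (xs i)); S = pt (xs (i - 1)) (h (xs (i - 1)));
              M = pt (m i) 0; U = pt (u i) (h (u i))
          in {tri A S M, tri S M U, tri M U Q, tri M B Q})))"

end

theory Submission
  imports Defs
begin


definition orient :: "real^2 \<Rightarrow> real^2 \<Rightarrow> real^2 \<Rightarrow> real" where
  "orient a b p = (b$1 - a$1) * (p$2 - a$2) - (b$2 - a$2) * (p$1 - a$1)"

lemma pt_comp [simp]: "pt x y $ 1 = x" "pt x y $ 2 = y"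
  by (simp_all add: pt_def)

lemma pt_eta: "p = pt (p$1) (p$2)"
  by (simp add: vec_eq_iff forall_2)

lemma pt_eq_iff: "pt x y = pt x' y' \<longleftrightarrow> x = x' \<and> y = y'"
  by (metis pt_comp)

lemma area_tri: "area (tri a b c) = \<bar>orient a b c\<bar> / 2"
proof -
  have "closed (tri a b c)" unfolding tri_def
    by (intro compact_imp_closed finite_imp_compact_convex_hull) auto
  then have "area (tri a b c) = measure lborel (tri a b c)"
    unfolding area_def by (intro measure_completion) auto
  also have "\<dots> = \<bar>orient a b c\<bar> / 2"
    unfolding tri_def content_triangle orient_def
    by (simp add: algebra_simps abs_minus_commute)
  finally show ?thesis .
qed

lemma orient_sum: "orient b c p + orient c a p + orient a b p = orient a b c"
  unfolding orient_def by (simp add: algebra_simps)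

lemma orient_comp1: "orient a b c * p$1 = orient b c p * a$1 + orient c a p * b$1 + orient a b p * c$1"
  unfolding orient_def by (simp add: algebra_simps)

lemma orient_comp2: "orient a b c * p$2 = orient b c p * a$2 + orient c a p * b$2 + orient a b p * c$2"
  unfolding orient_def by (simp add: algebra_simps)

lemma orient_comp: "orient a b c * p$i = orient b c p * a$i + orient c a p * b$i + orient a b p * c$i"
  if "i = 1 \<or> i = 2" for i
  using that orient_comp1 orient_comp2 by blast

lemma in_tri:
  assumes "orient a b c > 0" "orient a b p \<ge> 0" "orient b c p \<ge> 0" "orient c a p \<ge> 0"
  shows "p \<in> tri a b c"
proof -
  define D where "D = orient a b c"
  define u where "u = orient b c p / D"
  define v where "v = orient c a p / D"
  define w where "w = orient a b p / D"
  have D: "D > 0" using assms D_def by simp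
  have sum: "u + v + w = 1" unfolding u_def v_def w_def using D orient_sum[of b c p a]
    by (simp add: D_def add_divide_distrib[symmetric])
  have "p$i = u * a$i + v * b$i + w * c$i" if "i = 1 \<or> i = 2" for i
    using orient_comp[OF that, of a b c p] D unfolding u_def v_def w_def D_def
    by (simp add: field_simps)
  then have "p = u *\<^sub>R a + v *\<^sub>R b + w *\<^sub>R c"
    unfolding vec_eq_iff forall_2 by simp
  moreover have "u \<ge> 0" "v \<ge> 0" "w \<ge> 0" using assms D by (auto simp: u_def v_def w_def)
  ultimately show ?thesis unfolding tri_def convex_hull_3 using sum by blast
qed

lemma nondeg_tri:
  assumes "orient a b c \<noteq> 0" shows "nondeg_triangle (tri a b c)"
proof -
  have "\<not> collinear {a, b, c}"
  proof
    assume "collinear {a,b,c}"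
    then obtain u where u: "\<forall>x\<in>{a,b,c}. \<forall>y\<in>{a,b,c}. \<exists>t. x - y = t *\<^sub>R u"
      unfolding collinear_def by blast
    then obtain s t where st: "b - a = s *\<^sub>R u" "c - a = t *\<^sub>R u" by blast
    have "(b - a)$1 = (s *\<^sub>R u)$1" "(b - a)$2 = (s *\<^sub>R u)$2"
      "(c - a)$1 = (t *\<^sub>R u)$1" "(c - a)$2 = (t *\<^sub>R u)$2" using st by simp_all
    then have "b$1 - a$1 = s * u$1" "b$2 - a$2 = s * u$2" "c$1 - a$1 = t * u$1" "c$2 - a$2 = t * u$2"
      by simp_all
    then have "orient a b c = 0" unfolding orient_def by simp
    then show False using assms by simp
  qed
  then show ?thesis unfolding nondeg_triangle_def by blast
qed

lemma orient_lin: "orient P R p = (R$2 - P$2) * P$1 - (R$1 - P$1) * P$2 + (-(R$2 - P$2)) * p$1 + (R$1 - P$1) * p$2"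
  unfolding orient_def by (simp add: algebra_simps)

lemma convex_half: "convex {p::real^2. \<alpha> * p$1 + \<beta> * p$2 \<le> \<gamma>}"
proof -
  have "{p::real^2. \<alpha> * p$1 + \<beta> * p$2 \<le> \<gamma>} = {p. inner (vector [\<alpha>, \<beta>]) p \<le> \<gamma>}"
    by (simp add: inner_vec_def sum_2)
  then show ?thesis by (simp add: convex_halfspace_le)
qed

lemma interior_half:
  assumes "(\<alpha>, \<beta>) \<noteq> (0,0)"
  shows "interior {p::real^2. \<alpha> * p$1 + \<beta> * p$2 \<le> \<gamma>} = {p. \<alpha> * p$1 + \<beta> * p$2 < \<gamma>}"
proof -
  have e: "\<And>p::real^2. inner (vector [\<alpha>, \<beta>]) p = \<alpha> * p$1 + \<beta> * p$2"
    by (simp add: inner_vec_def sum_2)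
  have "vector [\<alpha>, \<beta>] \<noteq> (0::real^2)" using assms
    by (metis pt_comp pt_def zero_index)
  then have "interior {p::real^2. inner (vector [\<alpha>, \<beta>]) p \<le> \<gamma>} = {p. inner (vector [\<alpha>, \<beta>]) p < \<gamma>}"
    by (rule interior_halfspace_le)
  then show ?thesis unfolding e .
qed

lemma tri_sub_le:
  assumes "orient P R a \<le> 0" "orient P R b \<le> 0" "orient P R c \<le> 0"
  shows "tri a b c \<subseteq> {p. orient P R p \<le> 0}"
proof -
  have eq: "{p. orient P R p \<le> 0} = {p::real^2. (-(R$2 - P$2)) * p$1 + (R$1 - P$1) * p$2 \<le> -((R$2 - P$2) * P$1 - (R$1 - P$1) * P$2)}"
    by (subst orient_lin) (auto simp: algebra_simps)
  have c: "convex {p. orient P R p \<le> 0}" unfolding eq by (rule convex_half)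
  show ?thesis unfolding tri_def
    by (rule hull_minimal) (use assms c in auto)
qed

lemma orient_neg: "orient R P p = - orient P R p"
  unfolding orient_def by (simp add: algebra_simps)

lemma tri_sub_ge:
  assumes "orient P R a \<ge> 0" "orient P R b \<ge> 0" "orient P R c \<ge> 0"
  shows "tri a b c \<subseteq> {p. orient P R p \<ge> 0}"
  using tri_sub_le[of R P a b c] assms by (auto simp: orient_neg[of R P])

definition sepr :: "(real^2) set \<Rightarrow> (real^2) set \<Rightarrow> bool" where
  "sepr T T' \<longleftrightarrow> (\<exists>P R. P \<noteq> R \<and> T \<subseteq> {p. orient P R p \<le> 0} \<and> T' \<subseteq> {p. orient P R p \<ge> 0}
      \<and> ((\<exists>z\<in>T. orient P R z < 0) \<or> (\<exists>z\<in>T'. orient P R z > 0)))"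

lemma sepr_disj:
  assumes "sepr T T'" shows "interior T \<inter> interior T' = {}" "T \<noteq> T'"
proof -
  obtain P R where PR: "P \<noteq> R" "T \<subseteq> {p. orient P R p \<le> 0}" "T' \<subseteq> {p. orient P R p \<ge> 0}"
    "(\<exists>z\<in>T. orient P R z < 0) \<or> (\<exists>z\<in>T'. orient P R z > 0)"
    using assms unfolding sepr_def by blast
  define \<alpha> where "\<alpha> = -(R$2 - P$2)"
  define \<beta> where "\<beta> = R$1 - P$1"
  define \<gamma> where "\<gamma> = -((R$2 - P$2) * P$1 - (R$1 - P$1) * P$2)"
  have ab: "(\<alpha>, \<beta>) \<noteq> (0,0)" "(-\<alpha>, -\<beta>) \<noteq> (0,0)" using PR(1)
    by (auto simp: \<alpha>_def \<beta>_def vec_eq_iff forall_2)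
  have e1: "{p. orient P R p \<le> 0} = {p::real^2. \<alpha> * p$1 + \<beta> * p$2 \<le> \<gamma>}"
    by (subst orient_lin) (auto simp: algebra_simps \<alpha>_def \<beta>_def \<gamma>_def)
  have e2: "{p. orient P R p \<ge> 0} = {p::real^2. (-\<alpha>) * p$1 + (-\<beta>) * p$2 \<le> -\<gamma>}"
    by (subst orient_lin) (auto simp: algebra_simps \<alpha>_def \<beta>_def \<gamma>_def)
  have "interior T \<subseteq> {p. \<alpha> * p$1 + \<beta> * p$2 < \<gamma>}"
    using interior_mono[OF PR(2)] unfolding e1 interior_half[OF ab(1)] .
  moreover have "interior T' \<subseteq> {p. (-\<alpha>) * p$1 + (-\<beta>) * p$2 < -\<gamma>}"
    using interior_mono[OF PR(3)] unfolding e2 interior_half[OF ab(2)] .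
  ultimately show "interior T \<inter> interior T' = {}"
  proof (intro equalityI subsetI)
    fix x assume "x \<in> interior T \<inter> interior T'"
    with \<open>interior T \<subseteq> _\<close> \<open>interior T' \<subseteq> _\<close> have "\<alpha> * x$1 + \<beta> * x$2 < \<gamma>" "(-\<alpha>) * x$1 + (-\<beta>) * x$2 < -\<gamma>"
      by auto
    then show "x \<in> {}" by linarith
  qed auto
  show "T \<noteq> T'"
  proof
    assume TT: "T = T'"
    from PR(4) show False
    proof (elim disjE bexE)
      fix z assume z: "z \<in> T" "orient P R z < 0"
      then have "orient P R z \<ge> 0" using PR(3) TT by blast
      with z show False by linarith
    next
      fix z assume z: "z \<in> T'" "orient P R z > 0"
      then have "orient P R z \<le> 0" using PR(2) TT by blast
      with z show False by linarith
    qed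
  qed
qed


lemma orient_pt [simp]: "orient (pt x1 y1) (pt x2 y2) (pt x3 y3) = (x2-x1)*(y3-y1) - (y2-y1)*(x3-x1)"
  by (simp add: orient_def)

lemma tri_vert: "a \<in> tri a b c \<and> b \<in> tri a b c \<and> c \<in> tri a b c"
  unfolding tri_def by (simp add: hull_inc)

lemma sepr_tri:
  assumes "P \<noteq> R" "orient P R a \<le> 0" "orient P R b \<le> 0" "orient P R c \<le> 0"
    "orient P R a' \<ge> 0" "orient P R b' \<ge> 0" "orient P R c' \<ge> 0"
    "orient P R a < 0 \<or> orient P R b < 0 \<or> orient P R c < 0 \<or> orient P R a' > 0 \<or> orient P R b' > 0 \<or> orient P R c' > 0"
  shows "sepr (tri a b c) (tri a' b' c')"
  unfolding sepr_def
proof (intro exI conjI)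
  show "P \<noteq> R" by fact
  show "tri a b c \<subseteq> {p. orient P R p \<le> 0}" using assms by (intro tri_sub_le)
  show "tri a' b' c' \<subseteq> {p. orient P R p \<ge> 0}" using assms by (intro tri_sub_ge)
  show "(\<exists>z\<in>tri a b c. orient P R z < 0) \<or> (\<exists>z\<in>tri a' b' c'. 0 < orient P R z)"
    using assms(8) tri_vert[of a b c] tri_vert[of a' b' c'] by blast
qed

definition xin :: "(real^2) set \<Rightarrow> real \<Rightarrow> real \<Rightarrow> bool" where
  "xin T a b \<longleftrightarrow> (\<exists>p q r. T = tri p q r \<and> a \<le> p$1 \<and> p$1 \<le> b \<and> a \<le> q$1 \<and> q$1 \<le> b
     \<and> a \<le> r$1 \<and> r$1 \<le> b \<and> (p$1 > a \<or> q$1 > a \<or> r$1 > a))"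

lemma xin_sepr:
  assumes "xin T a b" "xin T' a' b'" "b \<le> a'"
  shows "sepr T' T"
proof -
  obtain p q r where T: "T = tri p q r" "p$1 \<le> b" "q$1 \<le> b" "r$1 \<le> b"
    using assms(1) unfolding xin_def by blast
  obtain p' q' r' where T': "T' = tri p' q' r'" "a' \<le> p'$1" "a' \<le> q'$1" "a' \<le> r'$1"
      "p'$1 > a' \<or> q'$1 > a' \<or> r'$1 > a'"
    using assms(2) unfolding xin_def by blast
  have o: "orient (pt b 0) (pt b 1) z = b - z$1" for z
    by (simp add: orient_def)
  show ?thesis unfolding T T'
    by (rule sepr_tri[of "pt b 0" "pt b 1"]) (use T T' assms(3) in \<open>auto simp: o pt_eq_iff\<close>)
qed

context
  fixes a b m ha hb :: real
  assumes am: "a < m" and mb: "m < b" and ha: "0 < ha" and hb: "0 < hb"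
begin


lemma sl_pos: "((b - m) * ha + (m - a) * hb) > 0" "(m - a) * ha > 0" "(m - a) * hb > 0" "(b - m) * ha > 0" "(b - m) * hb > 0"
  using am mb ha hb by (auto intro!: add_pos_pos mult_pos_pos)

lemma sl_or:
  "orient (pt a 0) (pt a ha) (pt m 0) = - ((m - a) * ha)"
  "orient (pt a ha) (pt m 0) (pt ((a + b) / 2) ((ha + hb) / 2)) = ((b - m) * ha + (m - a) * hb) / 2"
  "orient (pt m 0) (pt ((a + b) / 2) ((ha + hb) / 2)) (pt b hb) = - ((b - m) * ha + (m - a) * hb) / 2"
  "orient (pt m 0) (pt b 0) (pt b hb) = (b - m) * hb"
  "orient (pt m 0) (pt a ha) (pt a 0) = (m - a) * ha"
  "orient (pt m 0) (pt a ha) (pt ((a + b) / 2) ((ha + hb) / 2)) = - ((b - m) * ha + (m - a) * hb) / 2"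
  "orient (pt m 0) (pt a ha) (pt b hb) = - ((b - m) * ha + (m - a) * hb)"
  "orient (pt m 0) (pt a ha) (pt b 0) = - ((b - m) * ha)"
  "orient (pt m 0) (pt b hb) (pt b 0) = - ((b - m) * hb)"
  "orient (pt m 0) (pt b hb) (pt a 0) = (m - a) * hb"
  "orient (pt m 0) (pt b hb) (pt a ha) = ((b - m) * ha + (m - a) * hb)"
  "orient (pt m 0) (pt b hb) (pt ((a + b) / 2) ((ha + hb) / 2)) = ((b - m) * ha + (m - a) * hb) / 2"
  "orient (pt m 0) (pt ((a + b) / 2) ((ha + hb) / 2)) (pt a ha) = ((b - m) * ha + (m - a) * hb) / 2"
  "orient (pt m 0) (pt ((a + b) / 2) ((ha + hb) / 2)) (pt b hb) = - ((b - m) * ha + (m - a) * hb) / 2"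
  "orient (pt m 0) (pt a ha) (pt a ha) = 0" "orient (pt m 0) (pt a ha) (pt m 0) = 0" "orient (pt m 0) (pt b hb) (pt b hb) = 0" "orient (pt m 0) (pt b hb) (pt m 0) = 0"
  "orient (pt m 0) (pt ((a + b) / 2) ((ha + hb) / 2)) (pt ((a + b) / 2) ((ha + hb) / 2)) = 0" "orient (pt m 0) (pt ((a + b) / 2) ((ha + hb) / 2)) (pt m 0) = 0"
  by (simp_all add: algebra_simps divide_simps)

lemma sl_nondeg:
  "nondeg_triangle (tri (pt a 0) (pt a ha) (pt m 0))" "nondeg_triangle (tri (pt a ha) (pt m 0) (pt ((a + b) / 2) ((ha + hb) / 2)))"
  "nondeg_triangle (tri (pt m 0) (pt ((a + b) / 2) ((ha + hb) / 2)) (pt b hb))" "nondeg_triangle (tri (pt m 0) (pt b 0) (pt b hb))"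
  using sl_pos by (auto intro!: nondeg_tri simp del: orient_pt simp add: sl_or)

lemma sl_area:
  "area (tri (pt a 0) (pt a ha) (pt m 0)) = (m - a) * ha / 2"
  "area (tri (pt m 0) (pt b 0) (pt b hb)) = (b - m) * hb / 2"
  "area (tri (pt a ha) (pt m 0) (pt ((a + b) / 2) ((ha + hb) / 2))) = ((b - m) * ha + (m - a) * hb) / 4"
  "area (tri (pt m 0) (pt ((a + b) / 2) ((ha + hb) / 2)) (pt b hb)) = ((b - m) * ha + (m - a) * hb) / 4"
  using sl_pos by (simp_all only: area_tri sl_or) simp_all

lemma sl_ne: "(pt m 0) \<noteq> (pt a ha)" "(pt m 0) \<noteq> (pt b hb)" "(pt m 0) \<noteq> (pt ((a + b) / 2) ((ha + hb) / 2))"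
  using ha hb by (auto simp: pt_eq_iff)

lemma sl_sep:
  "sepr (tri (pt a ha) (pt m 0) (pt ((a + b) / 2) ((ha + hb) / 2))) (tri (pt a 0) (pt a ha) (pt m 0))"
  "sepr (tri (pt m 0) (pt ((a + b) / 2) ((ha + hb) / 2)) (pt b hb)) (tri (pt a 0) (pt a ha) (pt m 0))"
  "sepr (tri (pt m 0) (pt b 0) (pt b hb)) (tri (pt a 0) (pt a ha) (pt m 0))"
  "sepr (tri (pt m 0) (pt b 0) (pt b hb)) (tri (pt a ha) (pt m 0) (pt ((a + b) / 2) ((ha + hb) / 2)))"
  "sepr (tri (pt m 0) (pt b 0) (pt b hb)) (tri (pt m 0) (pt ((a + b) / 2) ((ha + hb) / 2)) (pt b hb))"
  "sepr (tri (pt m 0) (pt ((a + b) / 2) ((ha + hb) / 2)) (pt b hb)) (tri (pt a ha) (pt m 0) (pt ((a + b) / 2) ((ha + hb) / 2)))"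
  subgoal by (rule sepr_tri[of "pt m 0" "(pt a ha)"]) (use sl_pos sl_ne in \<open>simp_all del: orient_pt add: sl_or\<close>)
  subgoal by (rule sepr_tri[of "pt m 0" "(pt a ha)"]) (use sl_pos sl_ne in \<open>simp_all del: orient_pt add: sl_or\<close>)
  subgoal by (rule sepr_tri[of "pt m 0" "(pt a ha)"]) (use sl_pos sl_ne in \<open>simp_all del: orient_pt add: sl_or\<close>)
  subgoal by (rule sepr_tri[of "pt m 0" "(pt b hb)"]) (use sl_pos sl_ne in \<open>simp_all del: orient_pt add: sl_or\<close>)
  subgoal by (rule sepr_tri[of "pt m 0" "(pt b hb)"]) (use sl_pos sl_ne in \<open>simp_all del: orient_pt add: sl_or\<close>)
  subgoal by (rule sepr_tri[of "pt m 0" "(pt ((a + b) / 2) ((ha + hb) / 2))"]) (use sl_pos sl_ne in \<open>simp_all del: orient_pt add: sl_or\<close>)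
  done

lemma sl_cover:
  assumes x: "a \<le> x" "x \<le> b" and y: "0 \<le> y" and below: "(b - a) * y \<le> (b - a) * ha + (hb - ha) * (x - a)"
  shows "pt x y \<in> tri (pt a 0) (pt a ha) (pt m 0) \<union> tri (pt a ha) (pt m 0) (pt ((a + b) / 2) ((ha + hb) / 2))
     \<union> tri (pt m 0) (pt ((a + b) / 2) ((ha + hb) / 2)) (pt b hb) \<union> tri (pt m 0) (pt b 0) (pt b hb)"
proof -
  let ?p = "pt x y"
  let ?U = "pt ((a + b) / 2) ((ha + hb) / 2)"
  let ?L = "(b - a) * ha + (hb - ha) * (x - a) - (b - a) * y"
  have L: "?L \<ge> 0" using below by linarith
  have oUS: "orient ?U (pt a ha) ?p = ?L / 2"
    by (simp add: algebra_simps divide_simps)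
  have oQU: "orient (pt b hb) ?U ?p = ?L / 2"
    by (simp add: algebra_simps divide_simps)
  have n1: "(m - a) * y \<ge> 0" "ha * (x - a) \<ge> 0" "(b - m) * y \<ge> 0" "hb * (b - x) \<ge> 0"
    using am mb ha hb x y by (simp_all add: mult_nonneg_nonneg)
  have neg: "orient Q P p = - orient P Q p" for P Q p by (rule orient_neg)
  show ?thesis
  proof (cases "orient (pt m 0) (pt a ha) ?p \<ge> 0")
    case True
    have "?p \<in> tri (pt a 0) (pt m 0) (pt a ha)"
    proof (rule in_tri)
      show "orient (pt a 0) (pt m 0) (pt a ha) > 0" using sl_pos by (simp add: algebra_simps)
      show "orient (pt a 0) (pt m 0) ?p \<ge> 0" using n1 by simp
      show "orient (pt m 0) (pt a ha) ?p \<ge> 0" by fact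
      show "orient (pt a ha) (pt a 0) ?p \<ge> 0" using n1 by (simp add: algebra_simps)
    qed
    moreover have "tri (pt a 0) (pt m 0) (pt a ha) = tri (pt a 0) (pt a ha) (pt m 0)"
      by (simp add: tri_def insert_commute)
    ultimately show ?thesis by simp
  next
    case F1: False
    show ?thesis
    proof (cases "orient (pt m 0) (pt b hb) ?p \<le> 0")
      case True
      have "?p \<in> tri (pt m 0) (pt b 0) (pt b hb)"
      proof (rule in_tri)
        show "orient (pt m 0) (pt b 0) (pt b hb) > 0" using sl_pos by (simp add: algebra_simps)
        show "orient (pt m 0) (pt b 0) ?p \<ge> 0" using n1 by simp
        show "orient (pt b 0) (pt b hb) ?p \<ge> 0" using n1 by (simp add: algebra_simps)
        show "orient (pt b hb) (pt m 0) ?p \<ge> 0" using True neg[of "pt b hb" "pt m 0" ?p] by linarith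
      qed
      then show ?thesis by simp
    next
      case F2: False
      show ?thesis
      proof (cases "orient (pt m 0) ?U ?p \<ge> 0")
        case True
        have "?p \<in> tri (pt m 0) ?U (pt a ha)"
        proof (rule in_tri)
          show "orient (pt m 0) ?U (pt a ha) > 0" using sl_pos sl_or(13) by (simp del: orient_pt)
          show "orient (pt m 0) ?U ?p \<ge> 0" by fact
          show "orient ?U (pt a ha) ?p \<ge> 0" using oUS L by (simp del: orient_pt)
          show "orient (pt a ha) (pt m 0) ?p \<ge> 0" using F1 neg[of "pt a ha" "pt m 0" ?p] by linarith
        qed
        moreover have "tri (pt m 0) ?U (pt a ha) = tri (pt a ha) (pt m 0) ?U"
          by (simp add: tri_def insert_commute)
        ultimately show ?thesis by simp
      next
        case False
        have "?p \<in> tri (pt m 0) (pt b hb) ?U"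
        proof (rule in_tri)
          show "orient (pt m 0) (pt b hb) ?U > 0" using sl_pos sl_or(12) by (simp del: orient_pt)
          show "orient (pt m 0) (pt b hb) ?p \<ge> 0" using F2 by linarith
          show "orient (pt b hb) ?U ?p \<ge> 0" using oQU L by (simp del: orient_pt)
          show "orient ?U (pt m 0) ?p \<ge> 0" using False neg[of ?U "pt m 0" ?p] by linarith
        qed
        moreover have "tri (pt m 0) (pt b hb) ?U = tri (pt m 0) ?U (pt b hb)"
          by (simp add: tri_def insert_commute)
        ultimately show ?thesis by simp
      qed
    qed
  qed
qed

end



definition topT :: "real \<Rightarrow> (real^2) set" where
  "topT N = tri (pt 0 1) (pt 1 1) (pt 1 (1 - 2 / N))"

definition tr :: "real \<Rightarrow> real \<Rightarrow> real \<Rightarrow> nat \<Rightarrow> (real^2) set" where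
  "tr N a b j = (let ha = 1 - 2 * a / N; hb = 1 - 2 * b / N; m = a + (b - a) * hb / (ha + hb) in
     if j = 1 then tri (pt a 0) (pt a ha) (pt m 0)
     else if j = 2 then tri (pt a ha) (pt m 0) (pt ((a + b) / 2) ((ha + hb) / 2))
     else if j = 3 then tri (pt m 0) (pt ((a + b) / 2) ((ha + hb) / 2)) (pt b hb)
     else tri (pt m 0) (pt b 0) (pt b hb))"

lemma mem_sq: "p \<in> unit_square \<longleftrightarrow> 0 \<le> p$1 \<and> p$1 \<le> 1 \<and> 0 \<le> p$2 \<and> p$2 \<le> 1"
  unfolding unit_square_def mem_box_cart forall_2 by auto

lemma tri_sq:
  assumes "p \<in> unit_square" "q \<in> unit_square" "r \<in> unit_square"
  shows "tri p q r \<subseteq> unit_square"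
  unfolding tri_def using assms
  by (intro hull_minimal) (auto simp: unit_square_def convex_box)

lemma top_props:
  assumes N: "N \<ge> 5"
  shows "nondeg_triangle (topT N)" "topT N \<subseteq> unit_square" "area (topT N) = 1 / N"
    "\<And>x y. 0 \<le> x \<Longrightarrow> x \<le> 1 \<Longrightarrow> 1 - 2 * x / N \<le> y \<Longrightarrow> y \<le> 1 \<Longrightarrow> pt x y \<in> topT N"
proof -
  have o: "orient (pt 0 1) (pt 1 1) (pt 1 (1 - 2 / N)) = - 2 / N" by simp
  show "nondeg_triangle (topT N)" unfolding topT_def using N by (intro nondeg_tri) simp
  show "area (topT N) = 1 / N" unfolding topT_def area_tri o using N by simp
  show "topT N \<subseteq> unit_square" unfolding topT_def using N
    by (intro tri_sq) (auto simp: mem_sq field_simps)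
  fix x y :: real
  assume xy: "0 \<le> x" "x \<le> 1" "1 - 2 * x / N \<le> y" "y \<le> 1"
  have "pt x y \<in> tri (pt 0 1) (pt 1 (1 - 2 / N)) (pt 1 1)"
  proof (rule in_tri)
    show "orient (pt 0 1) (pt 1 (1 - 2 / N)) (pt 1 1) > 0" using N by simp
    show "orient (pt 0 1) (pt 1 (1 - 2 / N)) (pt x y) \<ge> 0" using xy N by (simp add: field_simps)
    show "orient (pt 1 (1 - 2 / N)) (pt 1 1) (pt x y) \<ge> 0" using xy N by (simp add: field_simps)
    show "orient (pt 1 1) (pt 0 1) (pt x y) \<ge> 0" using xy N by (simp add: field_simps)
  qed
  then show "pt x y \<in> topT N" unfolding topT_def tri_def by (simp add: insert_commute)
qed

lemma xin_intro: "a \<le> x1 \<Longrightarrow> x1 \<le> b \<Longrightarrow> a \<le> x2 \<Longrightarrow> x2 \<le> b \<Longrightarrow> a \<le> x3 \<Longrightarrow> x3 \<le> b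
  \<Longrightarrow> (x1 > a \<or> x2 > a \<or> x3 > a) \<Longrightarrow> xin (tri (pt x1 y1) (pt x2 y2) (pt x3 y3)) a b"
  unfolding xin_def by (intro exI[of _ "pt x1 y1"] exI[of _ "pt x2 y2"] exI[of _ "pt x3 y3"]) simp

context
  fixes N a b :: real
  assumes N: "N \<ge> 5" and a0: "0 \<le> a" and ab: "a < b" and b1: "b \<le> 1"
begin

definition "ha = 1 - 2 * a / N"
definition "hb = 1 - 2 * b / N"
definition "mm = a + (b - a) * hb / (ha + hb)"

lemma hh: "ha \<ge> 3/5" "hb \<ge> 3/5" "ha \<le> 1" "hb \<le> 1" "hb < ha"
  using N a0 ab b1 unfolding ha_def hb_def by (auto simp: field_simps)

lemma mm: "a < mm" "mm < b" "mm - a = (b - a) * hb / (ha + hb)" "b - mm = (b - a) * ha / (ha + hb)"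
proof -
  have s: "ha + hb > 0" using hh by linarith
  have "(b - a) * hb / (ha + hb) > 0" using hh ab s by (auto intro!: divide_pos_pos mult_pos_pos)
  then show "a < mm" unfolding mm_def by simp
  show e: "mm - a = (b - a) * hb / (ha + hb)" unfolding mm_def by simp
  show e2: "b - mm = (b - a) * ha / (ha + hb)" unfolding mm_def using s by (simp add: field_simps)
  have "(b - a) * ha / (ha + hb) > 0" using hh ab s by (auto intro!: divide_pos_pos mult_pos_pos)
  then show "mm < b" using e2 by simp
qed

lemma tr_eq:
  "tr N a b 1 = tri (pt a 0) (pt a ha) (pt mm 0)"
  "tr N a b 2 = tri (pt a ha) (pt mm 0) (pt ((a + b) / 2) ((ha + hb) / 2))"
  "tr N a b 3 = tri (pt mm 0) (pt ((a + b) / 2) ((ha + hb) / 2)) (pt b hb)"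
  "tr N a b 4 = tri (pt mm 0) (pt b 0) (pt b hb)"
  "tr N a b (Suc 0) = tri (pt a 0) (pt a ha) (pt mm 0)"
  unfolding tr_def Let_def mm_def ha_def hb_def by simp_all

lemma j4: "j \<in> {1..4::nat} \<longleftrightarrow> j = 1 \<or> j = 2 \<or> j = 3 \<or> j = 4" by auto

lemma tr_nondeg: "j \<in> {1..4} \<Longrightarrow> nondeg_triangle (tr N a b j)"
  using sl_nondeg[OF mm(1) mm(2), of ha hb] hh unfolding j4 by (elim disjE; simp only: tr_eq; simp)

lemma tr_sq: "j \<in> {1..4} \<Longrightarrow> tr N a b j \<subseteq> unit_square"
  using hh mm a0 b1 ab unfolding j4 by (elim disjE; simp only: tr_eq; intro tri_sq; simp add: mem_sq)

lemma tr_xin: "j \<in> {1..4} \<Longrightarrow> xin (tr N a b j) a b"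
  using mm ab unfolding j4 by (elim disjE; simp only: tr_eq; intro xin_intro; simp)

lemma tr_top: "j \<in> {1..4} \<Longrightarrow> sepr (tr N a b j) (topT N)"
proof -
  have c: "orient (pt 0 1) (pt 1 (1 - 2 / N)) (pt x y) = y - 1 + 2 * x / N" for x y
    by (simp add: field_simps)
  have ne: "pt 0 1 \<noteq> pt 1 (1 - 2 / N)" by (simp add: pt_eq_iff)
  have xs: "2 * x / N < 1" if "x \<le> 1" for x using that N by (simp add: field_simps)
  have N0: "N > 0" using N by simp
  have f: "2 * a / N < 1" "2 * b / N < 1" "2 * mm / N < 1"
    using xs[of a] xs[of b] xs[of mm] mm(2) b1 ab by simp_all
  have g: "ha - 1 + 2 * a / N = 0" "hb - 1 + 2 * b / N = 0"
    "(ha + hb) / 2 - 1 + 2 * ((a + b) / 2) / N = 0"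
    unfolding ha_def hb_def using N0 by (simp_all add: field_simps)
  have h: "0 \<le> 2 * a / N" "0 \<le> 2 * mm / N" "0 \<le> 2 * b / N" "0 < 2 / N"
    using a0 mm(1) ab N0 by simp_all
  have k: "1 - 1 + 2 * 1 / N > 0" "1 - 1 + 2 * (0::real) / N = 0" "(1 - 2 / N) - 1 + 2 * 1 / N = 0"
    using N0 by simp_all
  note f = f g h k
  assume "j \<in> {1..4}"
  then show ?thesis unfolding j4 topT_def
    apply (elim disjE)
    subgoal
    apply (simp only: tr_eq)
    apply (rule sepr_tri[of "pt 0 1" "pt 1 (1 - 2 / N)"])
    apply (simp_all only: c ne not_False_eq_True)
    apply (use f in \<open>linarith | blast\<close>)+
    done
    subgoal
    apply (simp only: tr_eq)
    apply (rule sepr_tri[of "pt 0 1" "pt 1 (1 - 2 / N)"])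
    apply (simp_all only: c ne not_False_eq_True)
    apply (use f in \<open>linarith | blast\<close>)+
    done
    subgoal
    apply (simp only: tr_eq)
    apply (rule sepr_tri[of "pt 0 1" "pt 1 (1 - 2 / N)"])
    apply (simp_all only: c ne not_False_eq_True)
    apply (use f in \<open>linarith | blast\<close>)+
    done
    subgoal
    apply (simp only: tr_eq)
    apply (rule sepr_tri[of "pt 0 1" "pt 1 (1 - 2 / N)"])
    apply (simp_all only: c ne not_False_eq_True)
    apply (use f in \<open>linarith | blast\<close>)+
    done
    done
qed

lemma tr_sep: "j \<in> {1..4} \<Longrightarrow> j' \<in> {1..4} \<Longrightarrow> j \<noteq> j' \<Longrightarrow> sepr (tr N a b j) (tr N a b j') \<or> sepr (tr N a b j') (tr N a b j)"
  using sl_sep[OF mm(1) mm(2), of ha hb] hh unfolding j4 by (elim disjE; simp only: tr_eq; simp)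

lemma tr_cover:
  assumes "a \<le> x" "x \<le> b" "0 \<le> y" "y \<le> 1 - 2 * x / N"
  shows "\<exists>j\<in>{1..4}. pt x y \<in> tr N a b j"
proof -
  have "(b - a) * y \<le> (b - a) * (1 - 2 * x / N)" using assms ab by (intro mult_left_mono) auto
  also have "(b - a) * (1 - 2 * x / N) = (b - a) * ha + (hb - ha) * (x - a)"
    unfolding ha_def hb_def using N by (simp add: field_simps)
  finally have "pt x y \<in> tr N a b 1 \<union> tr N a b 2 \<union> tr N a b 3 \<union> tr N a b 4"
    unfolding tr_eq using sl_cover[OF mm(1) mm(2), of ha hb x y] hh assms by auto
  then show ?thesis unfolding j4 by auto
qed

lemma tr_area:
  assumes area: "(b - a) * (ha + hb) / 2 = 4 / N" and j: "j \<in> {1..4}"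
  shows "\<bar>area (tr N a b j) - 1 / N\<bar> \<le> 256 / N ^ 5"
proof -
  define w where "w = b - a"
  define s where "s = ha + hb"
  define d where "d = ha - hb"
  define \<delta> where "\<delta> = w * d^2 / (8 * s)"
  have s1: "s \<ge> 1" unfolding s_def using hh by linarith
  have w0: "w > 0" unfolding w_def using ab by simp
  have ws: "w * s = 8 / N" using area unfolding w_def s_def by (simp add: field_simps)
  have d: "d = 2 * w / N" unfolding d_def w_def ha_def hb_def using N by (simp add: field_simps)
  have w8: "w \<le> 8 / N"
  proof -
    have "w \<le> w * s" using w0 s1 by (simp add: mult_le_cancel_left1)
    then show ?thesis using ws by simp
  qed
  have hahb: "4 * ha * hb = s^2 - d^2" unfolding s_def d_def by (simp add: power2_eq_square algebra_simps)
  have sq: "ha^2 + hb^2 = (s^2 + d^2) / 2" unfolding s_def d_def by (simp add: power2_eq_square algebra_simps)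
  have spos: "s > 0" using s1 by simp
  have m3: "mm - a = w * hb / s" and m4: "b - mm = w * ha / s"
    using mm(3,4) unfolding w_def s_def by simp_all
  have A1: "(mm - a) * ha / 2 = 1 / N - \<delta>"
  proof -
    have "(mm - a) * ha / 2 = w * (4 * ha * hb) / (8 * s)" unfolding m3
      using spos by (simp add: field_simps)
    also have "\<dots> = w * s / 8 - \<delta>" unfolding hahb \<delta>_def using spos
      by (simp add: field_simps power2_eq_square)
    finally show ?thesis using ws by simp
  qed
  have A4: "(b - mm) * hb / 2 = 1 / N - \<delta>"
    using A1 spos unfolding m3 m4 by (simp add: field_simps)
  have A2: "((b - mm) * ha + (mm - a) * hb) / 4 = 1 / N + \<delta>"
  proof -
    have "((b - mm) * ha + (mm - a) * hb) / 4 = w * (ha^2 + hb^2) / (4 * s)" unfolding m3 m4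
      using spos by (simp add: field_simps power2_eq_square)
    also have "\<dots> = w * s / 8 + \<delta>" unfolding sq \<delta>_def using spos
      by (simp add: field_simps power2_eq_square)
    finally show ?thesis using ws by simp
  qed
  have \<delta>0: "\<delta> \<ge> 0" unfolding \<delta>_def using w0 spos by simp
  have \<delta>b: "\<delta> \<le> 256 / N ^ 5"
  proof -
    have d0: "0 \<le> d" unfolding d_def using hh by simp
    have dle: "d \<le> 16 / N^2" unfolding d using w8 N by (simp add: field_simps power2_eq_square)
    have d2: "d^2 \<le> (16 / N^2)^2" using d0 dle by (intro power_mono) auto
    have "\<delta> \<le> w * d^2 / 8" unfolding \<delta>_def using w0 s1
      by (intro divide_left_mono) (auto intro: mult_nonneg_nonneg)
    also have "\<dots> \<le> (8 / N) * (16 / N^2)^2 / 8"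
      using w8 d2 w0 N by (intro divide_right_mono mult_mono) auto
    also have "\<dots> = 256 / N^5" using N by (simp add: field_simps power2_eq_square eval_nat_numeral)
    finally show ?thesis .
  qed
  have ar: "area (tr N a b 1) = (mm - a) * ha / 2" "area (tr N a b 4) = (b - mm) * hb / 2"
    "area (tr N a b 2) = ((b - mm) * ha + (mm - a) * hb) / 4"
    "area (tr N a b 3) = ((b - mm) * ha + (mm - a) * hb) / 4"
    using sl_area[OF mm(1) mm(2), of ha hb] hh unfolding tr_eq by auto
  show ?thesis using j unfolding j4 by (elim disjE; simp only: ar A1 A2 A4; use \<delta>0 \<delta>b in simp)
qed

end



definition X :: "nat \<Rightarrow> nat \<Rightarrow> real" where
  "X n i = (real n - sqrt ((real n)^2 - 16 * real i)) / 2"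

definition MX :: "nat \<Rightarrow> nat \<Rightarrow> real" where
  "MX n i = X n (i - 1) + (X n i - X n (i - 1)) * (1 - 2 * X n i / real n) /
      ((1 - 2 * X n (i - 1) / real n) + (1 - 2 * X n i / real n))"

definition UX :: "nat \<Rightarrow> nat \<Rightarrow> real" where
  "UX n i = (X n (i - 1) + X n i) / 2"

lemma X_mono: "j \<le> i \<Longrightarrow> X n j \<le> X n i"
  unfolding X_def by (simp add: divide_right_mono)

lemma X_strict: "1 \<le> i \<Longrightarrow> X n (i - 1) < X n i"
proof -
  assume "1 \<le> i"
  then have "real (i - 1) < real i" by simp
  then have "sqrt ((real n)^2 - 16 * real i) < sqrt ((real n)^2 - 16 * real (i - 1))" by simp
  then show ?thesis unfolding X_def by (simp add: divide_strict_right_mono)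
qed

lemma X0: "X n 0 = 0" unfolding X_def by simp

context
  fixes n k :: nat
  assumes n5: "n \<ge> 5" and nk: "n = 4 * k + 1"
begin

lemma Nk: "real n = 4 * real k + 1" using nk by simp

lemma Xk: "X n k = 1"
proof -
  have "(real n)^2 - 16 * real k = (real n - 2)^2" using Nk by (simp add: power2_eq_square algebra_simps)
  moreover have "real n - 2 \<ge> 0" using n5 by simp
  ultimately have "sqrt ((real n)^2 - 16 * real k) = real n - 2" by simp
  then show ?thesis unfolding X_def by simp
qed

lemma Xr: "i \<le> k \<Longrightarrow> 0 \<le> X n i \<and> X n i \<le> 1"
  using X_mono[of 0 i n] X_mono[of i k n] X0 Xk by simp

lemma XF: assumes "i \<le> k" shows "X n i - (X n i)^2 / real n = 4 * real i / real n"
proof -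
  define N where "N = real n"
  define r where "r = sqrt (N^2 - 16 * real i)"
  have N5: "N \<ge> 5" using n5 N_def by simp
  have "16 * real i \<le> 16 * real k" using assms by simp
  also have "\<dots> = 4 * N - 4" using Nk N_def by simp
  also have "\<dots> \<le> N^2"
  proof -
    have "(N - 2)^2 = N^2 - 4 * N + 4" by (simp add: power2_eq_square algebra_simps)
    moreover have "(N - 2)^2 \<ge> 0" by simp
    ultimately show ?thesis by linarith
  qed
  finally have "N^2 - 16 * real i \<ge> 0" by simp
  then have r2: "r^2 = N^2 - 16 * real i" unfolding r_def by simp
  have xe: "X n i = (N - r) / 2" unfolding X_def N_def r_def by simp
  have "X n i - (X n i)^2 / real n = (N^2 - r^2) / (4 * N)"
    using N5 unfolding N_def[symmetric] xe by (simp add: field_simps power2_eq_square)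
  also have "\<dots> = 4 * real i / N" unfolding r2 using N5 by (simp add: field_simps)
  finally show ?thesis unfolding N_def .
qed

lemma Xarea:
  assumes "1 \<le> i" "i \<le> k"
  shows "(X n i - X n (i - 1)) * ((1 - 2 * X n (i - 1) / real n) + (1 - 2 * X n i / real n)) / 2 = 4 / real n"
proof -
  have N: "real n > 0" using n5 by simp
  have e1: "X n i - (X n i)^2 / real n = 4 * real i / real n" using XF assms by simp
  have e2: "X n (i - 1) - (X n (i - 1))^2 / real n = 4 * real (i - 1) / real n" using XF assms by simp
  have ri: "real (i - 1) = real i - 1" using assms by simp
  have "(X n i - X n (i - 1)) * ((1 - 2 * X n (i - 1) / real n) + (1 - 2 * X n i / real n)) / 2
      = (X n i - (X n i)^2 / real n) - (X n (i - 1) - (X n (i - 1))^2 / real n)"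
    using N by (simp add: field_simps power2_eq_square)
  also have "\<dots> = 4 / real n" unfolding e1 e2 ri using N by (simp add: field_simps)
  finally show ?thesis .
qed

end

lemma step_cover:
  fixes f :: "nat \<Rightarrow> real"
  shows "0 < k \<Longrightarrow> f 0 \<le> x \<Longrightarrow> x \<le> f k \<Longrightarrow> \<exists>i\<in>{1..k}. f (i - 1) \<le> x \<and> x \<le> f i"
proof (induction k)
  case 0 then show ?case by simp
next
  case (Suc k)
  show ?case
  proof (cases "k = 0")
    case True then show ?thesis using Suc.prems by auto
  next
    case False
    show ?thesis
    proof (cases "x \<le> f k")
      case True
      then obtain i where "i \<in> {1..k}" "f (i - 1) \<le> x \<and> x \<le> f i" using Suc.IH Suc.prems False by auto
      then show ?thesis by (intro bexI[of _ i]) auto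
    next
      case F: False
      then show ?thesis using Suc.prems by (intro bexI[of _ "Suc k"]) auto
    qed
  qed
qed

lemma sd_eq:
  assumes "n \<ge> 5"
  shows "slice_dissection n k (X n) (MX n) (UX n) =
    insert (topT (real n)) ((\<lambda>(i, j). tr (real n) (X n (i - 1)) (X n i) j) ` ({1..k} \<times> {1..4}))"
proof -
  have N: "real n \<noteq> 0" using assms by simp
  have j4: "{1..4::nat} = {1, 2, 3, 4}" by auto
  have U: "pt (UX n i) (1 - 2 * UX n i / real n) =
     pt ((X n (i - 1) + X n i) / 2) (((1 - 2 * X n (i - 1) / real n) + (1 - 2 * X n i / real n)) / 2)" for i
    unfolding UX_def using N by (simp add: pt_eq_iff field_simps)
  have inner: "(\<lambda>j. tr (real n) (X n (i - 1)) (X n i) j) ` {1..4} =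
     {tri (pt (X n (i - 1)) 0) (pt (X n (i - 1)) (1 - 2 * X n (i - 1) / real n)) (pt (MX n i) 0),
      tri (pt (X n (i - 1)) (1 - 2 * X n (i - 1) / real n)) (pt (MX n i) 0) (pt (UX n i) (1 - 2 * UX n i / real n)),
      tri (pt (MX n i) 0) (pt (UX n i) (1 - 2 * UX n i / real n)) (pt (X n i) (1 - 2 * X n i / real n)),
      tri (pt (MX n i) 0) (pt (X n i) 0) (pt (X n i) (1 - 2 * X n i / real n))}" for i
  proof -
    let ?t = "tr (real n) (X n (i - 1)) (X n i)"
    have im: "?t ` {1..4} = {?t 1, ?t 2, ?t 3, ?t 4}" unfolding j4 by simp
    have t1: "?t 1 = tri (pt (X n (i - 1)) 0) (pt (X n (i - 1)) (1 - 2 * X n (i - 1) / real n)) (pt (MX n i) 0)"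
      by (simp add: tr_def Let_def MX_def)
    have t2: "?t 2 = tri (pt (X n (i - 1)) (1 - 2 * X n (i - 1) / real n)) (pt (MX n i) 0) (pt (UX n i) (1 - 2 * UX n i / real n))"
      unfolding U by (simp add: tr_def Let_def MX_def)
    have t3: "?t 3 = tri (pt (MX n i) 0) (pt (UX n i) (1 - 2 * UX n i / real n)) (pt (X n i) (1 - 2 * X n i / real n))"
      unfolding U by (simp add: tr_def Let_def MX_def)
    have t4: "?t 4 = tri (pt (MX n i) 0) (pt (X n i) 0) (pt (X n i) (1 - 2 * X n i / real n))"
      by (simp add: tr_def Let_def MX_def)
    show ?thesis unfolding im t1 t2 t3 t4 ..
  qed
  have "(\<lambda>(i, j). tr (real n) (X n (i - 1)) (X n i) j) ` ({1..k} \<times> {1..4})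
      = (\<Union>i\<in>{1..k}. (\<lambda>j. tr (real n) (X n (i - 1)) (X n i) j) ` {1..4})"
    by auto
  then show ?thesis unfolding slice_dissection_def Let_def topT_def inner by simp
qed

theorem theorem7p2:
  shows "\<exists>C::real. C > 0 \<and>
    (\<forall>n::nat. n \<ge> 5 \<and> n mod 4 = 1 \<longrightarrow>
       (\<exists>D xs m u. dissection D unit_square \<and> card D = n \<and>
          drange D \<le> C / real n ^ 5 \<and>
          xs 0 = 0 \<and> xs ((n - 1) div 4) = 1 \<and>
          (\<forall>i\<in>{1..(n - 1) div 4}. xs (i - 1) < xs i \<and>
              xs (i - 1) \<le> m i \<and> m i \<le> xs i \<and>
              xs (i - 1) \<le> u i \<and> u i \<le> xs i) \<and>
          D = slice_dissection n ((n - 1) div 4) xs m u))"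
proof (intro exI[of _ 512] conjI allI impI)
  show "(512::real) > 0" by simp
  fix n :: nat assume H: "n \<ge> 5 \<and> n mod 4 = 1"
  define k where "k = (n - 1) div 4"
  have n5: "n \<ge> 5" using H by simp
  have nk: "n = 4 * k + 1" using H unfolding k_def by presburger
  have k1: "k \<ge> 1" using nk n5 by simp
  define N where "N = real n"
  have N5: "N \<ge> 5" using n5 N_def by simp
  define F where "F = (\<lambda>(i, j). tr N (X n (i - 1)) (X n i) j)"
  define I where "I = {1..k} \<times> {1..(4::nat)}"
  define D where "D = slice_dissection n k (X n) (MX n) (UX n)"
  have DE: "D = insert (topT N) (F ` I)"
    unfolding D_def F_def I_def N_def using sd_eq[OF n5] by simp
  have sl: "0 \<le> X n (i - 1)" "X n (i - 1) < X n i" "X n i \<le> 1" if "i \<in> {1..k}" for i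
    using Xr[OF n5 nk, of "i - 1"] Xr[OF n5 nk, of i] X_strict[of i n] that by auto
  have Fp: "nondeg_triangle (F p)" "F p \<subseteq> unit_square" "sepr (F p) (topT N)"
     "\<bar>area (F p) - 1 / N\<bar> \<le> 256 / N ^ 5" if pI: "p \<in> I" for p
  proof -
    obtain i j where p: "p = (i, j)" "i \<in> {1..k}" "j \<in> {1..4}" using pI unfolding I_def by auto
    note s = sl[OF p(2)]
    show "nondeg_triangle (F p)" unfolding p F_def using tr_nondeg[OF N5 s p(3)] by simp
    show "F p \<subseteq> unit_square" unfolding p F_def using tr_sq[OF N5 s p(3)] by simp
    show "sepr (F p) (topT N)" unfolding p F_def using tr_top[OF N5 s p(3)] by simp
    have ar: "(X n i - X n (i - 1)) * (ha N (X n (i - 1)) + hb N (X n i)) / 2 = 4 / N"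
      using Xarea[OF n5 nk, of i, unfolded N_def[symmetric]] p(2) unfolding ha_def[OF N5 s] hb_def[OF N5 s] by simp
    show "\<bar>area (F p) - 1 / N\<bar> \<le> 256 / N ^ 5" unfolding p F_def using tr_area[OF N5 s ar p(3)] by simp
  qed
  have Fsep: "sepr (F p) (F q) \<or> sepr (F q) (F p)" if pq: "p \<in> I" "q \<in> I" "p \<noteq> q" for p q
  proof -
    obtain i j where p: "p = (i, j)" "i \<in> {1..k}" "j \<in> {1..4}" using pq unfolding I_def by auto
    obtain i' j' where q: "q = (i', j')" "i' \<in> {1..k}" "j' \<in> {1..4}" using pq unfolding I_def by auto
    note s = sl[OF p(2)] and s' = sl[OF q(2)]
    consider "i = i'" | "i < i'" | "i' < i" by linarith
    then show ?thesis
    proof cases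
      case 1
      then have "j \<noteq> j'" using pq p q by auto
      then show ?thesis unfolding p q F_def using tr_sep[OF N5 s p(3) q(3)] 1 by simp
    next
      case 2
      have le: "X n i \<le> X n (i' - 1)" using 2 by (intro X_mono) simp
      have "sepr (F q) (F p)" unfolding p q F_def
        using xin_sepr[OF tr_xin[OF N5 s p(3)] tr_xin[OF N5 s' q(3)] le] by simp
      then show ?thesis by simp
    next
      case 3
      have le: "X n i' \<le> X n (i - 1)" using 3 by (intro X_mono) simp
      have "sepr (F p) (F q)" unfolding p q F_def
        using xin_sepr[OF tr_xin[OF N5 s' q(3)] tr_xin[OF N5 s p(3)] le] by simp
      then show ?thesis by simp
    qed
  qed
  have Fne: "F p \<noteq> F q" if "p \<in> I" "q \<in> I" "p \<noteq> q" for p q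
    using Fsep[OF that] sepr_disj(2) by metis
  have Fint: "interior (F p) \<inter> interior (F q) = {}" if "p \<in> I" "q \<in> I" "p \<noteq> q" for p q
    using Fsep[OF that] sepr_disj(1) by (metis Int_commute)
  have topnot: "topT N \<notin> F ` I" using Fp(3) sepr_disj(2) by fastforce
  have finI: "finite I" unfolding I_def by simp
  have inj: "inj_on F I" using Fne unfolding inj_on_def by blast
  have cardI: "card I = 4 * k" unfolding I_def by (simp add: card_cartesian_product)
  have card: "card D = n" unfolding DE using topnot finI inj cardI nk
    by (simp add: card_image)
  have finD: "finite D" unfolding DE using finI by simp
  have areas: "\<bar>area T - 1 / N\<bar> \<le> 256 / N ^ 5" if "T \<in> D" for T
  proof -
    have "256 / N ^ 5 \<ge> 0" using N5 by simp
    then show ?thesis using that Fp(4) top_props(3)[OF N5] unfolding DE by auto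
  qed
  have diss: "dissection D unit_square"
    unfolding dissection_def
  proof (intro conjI ballI impI)
    show "finite D" by fact
    fix T assume "T \<in> D"
    then show "nondeg_triangle T" unfolding DE using Fp(1) top_props(1)[OF N5] by auto
  next
    fix T T' assume T: "T \<in> D" "T' \<in> D" "T \<noteq> T'"
    show "interior T \<inter> interior T' = {}"
    proof (cases "T = topT N")
      case True
      then obtain q where q: "q \<in> I" "T' = F q" using T unfolding DE by auto
      then show ?thesis using True Fp(3)[OF q(1)] sepr_disj(1) by (metis Int_commute)
    next
      case False
      then obtain p where p: "p \<in> I" "T = F p" using T unfolding DE by auto
      show ?thesis
      proof (cases "T' = topT N")
        case True
        then show ?thesis using p Fp(3)[OF p(1)] sepr_disj(1) by metis
      next
        case False
        then obtain q where q: "q \<in> I" "T' = F q" using T unfolding DE by auto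
        then show ?thesis using p T(3) Fint by blast
      qed
    qed
  next
    show "\<Union> D = unit_square"
    proof
      show "\<Union> D \<subseteq> unit_square" unfolding DE using Fp(2) top_props(2)[OF N5] by auto
      show "unit_square \<subseteq> \<Union> D"
      proof
        fix p assume p: "p \<in> unit_square"
        define x where "x = p$1"
        define y where "y = p$2"
        have pe: "p = pt x y" unfolding x_def y_def by (rule pt_eta)
        have xy: "0 \<le> x" "x \<le> 1" "0 \<le> y" "y \<le> 1" using p unfolding mem_sq x_def y_def by auto
        show "p \<in> \<Union> D"
        proof (cases "1 - 2 * x / N \<le> y")
          case True
          then have "p \<in> topT N" unfolding pe using top_props(4)[OF N5] xy by simp
          then show ?thesis unfolding DE by auto
        next
          case False
          obtain i where i: "i \<in> {1..k}" "X n (i - 1) \<le> x" "x \<le> X n i"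
            using step_cover[of k "X n" x] k1 xy X0 Xk[OF n5 nk] by auto
          obtain j where j: "j \<in> {1..4}" "pt x y \<in> tr N (X n (i - 1)) (X n i) j"
            using tr_cover[OF N5 sl[OF i(1)] i(2) i(3) xy(3)] False by auto
          have "(i, j) \<in> I" using i j unfolding I_def by simp
          then have "F (i, j) \<in> D" unfolding DE by simp
          moreover have "p \<in> F (i, j)" unfolding F_def pe using j by simp
          ultimately show ?thesis by blast
        qed
      qed
    qed
  qed
  have dr: "drange D \<le> 512 / real n ^ 5"
  proof -
    let ?S = "{\<bar>area T - area T'\<bar> | T T'. T \<in> D \<and> T' \<in> D}"
    have Se: "?S = (\<lambda>(T, T'). \<bar>area T - area T'\<bar>) ` (D \<times> D)" by auto
    have fin: "finite ?S" unfolding Se using finD by simp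
    have ne: "?S \<noteq> {}" unfolding DE by blast
    have "\<forall>z\<in>?S. z \<le> 512 / N ^ 5"
    proof
      fix z assume "z \<in> ?S"
      then obtain T T' where T: "T \<in> D" "T' \<in> D" "z = \<bar>area T - area T'\<bar>" by blast
      have "z \<le> \<bar>area T - 1 / N\<bar> + \<bar>area T' - 1 / N\<bar>" unfolding T(3) by linarith
      also have "\<dots> \<le> 256 / N ^ 5 + 256 / N ^ 5" using areas T(1,2) by (intro add_mono)
      finally show "z \<le> 512 / N ^ 5" by simp
    qed
    then show ?thesis unfolding drange_def N_def using Max_le_iff[OF fin ne] by simp
  qed
  have mu: "X n (i - 1) \<le> MX n i \<and> MX n i \<le> X n i \<and> X n (i - 1) \<le> UX n i \<and> UX n i \<le> X n i"
    if "i \<in> {1..(n - 1) div 4}" for i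
  proof -
    have i: "i \<in> {1..k}" using that k_def by simp
    note s = sl[OF i]
    have "MX n i = mm N (X n (i - 1)) (X n i)"
      unfolding mm_def[OF N5 s] ha_def[OF N5 s] hb_def[OF N5 s] MX_def N_def[symmetric] ..
    then show ?thesis using mm(1,2)[OF N5 s] s unfolding UX_def by simp
  qed
  show "\<exists>D xs m u. dissection D unit_square \<and> card D = n \<and>
          drange D \<le> 512 / real n ^ 5 \<and>
          xs 0 = 0 \<and> xs ((n - 1) div 4) = 1 \<and>
          (\<forall>i\<in>{1..(n - 1) div 4}. xs (i - 1) < xs i \<and>
              xs (i - 1) \<le> m i \<and> m i \<le> xs i \<and>
              xs (i - 1) \<le> u i \<and> u i \<le> xs i) \<and>
          D = slice_dissection n ((n - 1) div 4) xs m u"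
  proof (rule exI[of _ D], rule exI[of _ "X n"], rule exI[of _ "MX n"], rule exI[of _ "UX n"], intro conjI ballI)
    show "dissection D unit_square" by fact
    show "card D = n" by fact
    show "drange D \<le> 512 / real n ^ 5" by fact
    show "X n 0 = 0" by (rule X0)
    show "X n ((n - 1) div 4) = 1" using Xk[OF n5 nk] k_def by simp
    fix i assume i: "i \<in> {1..(n - 1) div 4}"
    show "X n (i - 1) < X n i" using X_strict[of i n] i by simp
    show "X n (i - 1) \<le> MX n i" using mu[OF i] by auto
    show "MX n i \<le> X n i" using mu[OF i] by auto
    show "X n (i - 1) \<le> UX n i" using mu[OF i] by auto
    show "UX n i \<le> X n i" using mu[OF i] by auto
  next
    show "D = slice_dissection n ((n - 1) div 4) (X n) (MX n) (UX n)" unfolding D_def k_def ..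
  qed
qed

end
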